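(* Let $\mathcal{L}$ be a compendious logic. Every non-finitary theory $K$ of $\mathcal{L}$ contains a cleaving, i.e., there is a cleaving $\mathcal{C}\subseteq K$.
   Context: A logic $(\mathrm{Fm},\mathrm{Cn})$ (countable $\mathrm{Fm}$) is compendious if it is Tarskian ($\mathrm{Cn}$ monotone, extensive, idempotent), Boolean (has $\neg,\lor$ with $\mathrm{Cn}(\{\varphi\})\cap\mathrm{Cn}(\{\neg\varphi\})=\mathrm{Cn}(\emptyset)$, $\mathrm{Cn}(\{\varphi,\neg\varphi\})=\mathrm{Fm}$, and the usual introduction and elimination rules for $\lor$ relative to $\mathrm{Cn}$), has infinitely many theories ($K=\mathrm{Cn}(K)$), and satisfies (Discerning): for all sets $X,Y$ of complete consistent theories, $\bigcap X=\bigcap Y$ implies $X=Y$. $\varphi\equiv\psi$ iff $\mathrm{Cn}(\{\varphi\})=\mathrm{Cn}(\{\psi\})$. A theory is non-finitary if it contains infinitely many $\equiv$-classes. A cleaving is an infinite set of formulae $\mathcal{C}$ such that for all distinct $\varphi,\psi\in\mathcal{C}$: (CL1) $\varphi\not\equiv\psi$, and (CL2) $\varphi\lor\psi\in\mathrm{Cn}(\emptyset)$. *)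

theory Defs
  imports Main "HOL-Library.Countable_Set"
begin

definition tarskian :: "('f set \<Rightarrow> 'f set) \<Rightarrow> bool" where
  "tarskian Cn \<longleftrightarrow>
     (\<forall>X Y. X \<subseteq> Y \<longrightarrow> Cn X \<subseteq> Cn Y) \<and>
     (\<forall>X. X \<subseteq> Cn X) \<and>
     (\<forall>X. Cn (Cn X) = Cn X)"

definition boolean_logic ::
  "('f set \<Rightarrow> 'f set) \<Rightarrow> ('f \<Rightarrow> 'f) \<Rightarrow> ('f \<Rightarrow> 'f \<Rightarrow> 'f) \<Rightarrow> bool" where
  "boolean_logic Cn ng dsj \<longleftrightarrow>
     (\<forall>\<phi>. Cn {\<phi>} \<inter> Cn {ng \<phi>} = Cn {}) \<and>
     (\<forall>\<phi>. Cn {\<phi>, ng \<phi>} = UNIV) \<and>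
     (\<forall>X \<phi> \<psi>. \<phi> \<in> Cn X \<longrightarrow> dsj \<phi> \<psi> \<in> Cn X) \<and>
     (\<forall>X \<phi> \<psi>. \<psi> \<in> Cn X \<longrightarrow> dsj \<phi> \<psi> \<in> Cn X) \<and>
     (\<forall>X \<phi> \<psi> \<chi>. \<chi> \<in> Cn (X \<union> {\<phi>}) \<longrightarrow> \<chi> \<in> Cn (X \<union> {\<psi>})
          \<longrightarrow> \<chi> \<in> Cn (X \<union> {dsj \<phi> \<psi>}))"

definition is_theory :: "('f set \<Rightarrow> 'f set) \<Rightarrow> 'f set \<Rightarrow> bool" where
  "is_theory Cn K \<longleftrightarrow> Cn K = K"

definition complete_consistent_theory ::
  "('f set \<Rightarrow> 'f set) \<Rightarrow> ('f \<Rightarrow> 'f) \<Rightarrow> 'f set \<Rightarrow> bool" where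
  "complete_consistent_theory Cn ng K \<longleftrightarrow>
     is_theory Cn K \<and> K \<noteq> UNIV \<and> (\<forall>\<phi>. \<phi> \<in> K \<or> ng \<phi> \<in> K)"

definition discerning :: "('f set \<Rightarrow> 'f set) \<Rightarrow> ('f \<Rightarrow> 'f) \<Rightarrow> bool" where
  "discerning Cn ng \<longleftrightarrow>
     (\<forall>X Y. X \<subseteq> {K. complete_consistent_theory Cn ng K} \<longrightarrow>
            Y \<subseteq> {K. complete_consistent_theory Cn ng K} \<longrightarrow>
            \<Inter>X = \<Inter>Y \<longrightarrow> X = Y)"

definition compendious ::
  "('f set \<Rightarrow> 'f set) \<Rightarrow> ('f \<Rightarrow> 'f) \<Rightarrow> ('f \<Rightarrow> 'f \<Rightarrow> 'f) \<Rightarrow> bool" where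
  "compendious Cn ng dsj \<longleftrightarrow>
     countable (UNIV :: 'f set) \<and>
     tarskian Cn \<and>
     boolean_logic Cn ng dsj \<and>
     infinite {K. is_theory Cn K} \<and>
     discerning Cn ng"

definition log_equiv :: "('f set \<Rightarrow> 'f set) \<Rightarrow> 'f \<Rightarrow> 'f \<Rightarrow> bool" where
  "log_equiv Cn \<phi> \<psi> \<longleftrightarrow> Cn {\<phi>} = Cn {\<psi>}"

definition non_finitary :: "('f set \<Rightarrow> 'f set) \<Rightarrow> 'f set \<Rightarrow> bool" where
  "non_finitary Cn K \<longleftrightarrow>
     infinite ((\<lambda>\<phi>. {\<psi>. log_equiv Cn \<psi> \<phi>}) ` K)"

definition cleaving ::
  "('f set \<Rightarrow> 'f set) \<Rightarrow> ('f \<Rightarrow> 'f \<Rightarrow> 'f) \<Rightarrow> 'f set \<Rightarrow> bool" where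
  "cleaving Cn dsj C \<longleftrightarrow>
     infinite C \<and>
     (\<forall>\<phi>\<in>C. \<forall>\<psi>\<in>C. \<phi> \<noteq> \<psi> \<longrightarrow>
        \<not> log_equiv Cn \<phi> \<psi> \<and> dsj \<phi> \<psi> \<in> Cn {})"

end

theory Submission
  imports Defs
begin

lemma fin_transfer:
  assumes "finite (f ` S)" and "\<forall>z\<in>S. \<forall>z'\<in>S. f z = f z' \<longrightarrow> g z = g z'"
  shows "finite (g ` S)"
proof -
  have "g ` S \<subseteq> (\<lambda>p. g (SOME z. z \<in> S \<and> f z = p)) ` (f ` S)"
  proof
    fix w assume "w \<in> g ` S"
    then obtain z where z: "z \<in> S" "w = g z" by blast
    have ex: "\<exists>z'. z' \<in> S \<and> f z' = f z" using z by blast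
    have "(SOME z'. z' \<in> S \<and> f z' = f z) \<in> S \<and> f (SOME z'. z' \<in> S \<and> f z' = f z) = f z"
      using someI_ex[OF ex] .
    then have "g (SOME z'. z' \<in> S \<and> f z' = f z) = g z" using assms(2) z by metis
    then show "w \<in> (\<lambda>p. g (SOME z. z \<in> S \<and> f z = p)) ` (f ` S)" using z by force
  qed
  then show ?thesis using assms(1) finite_subset by blast
qed

locale BLK =
  fixes Cn :: "'f set \<Rightarrow> 'f set" and ng :: "'f \<Rightarrow> 'f"
    and dsj :: "'f \<Rightarrow> 'f \<Rightarrow> 'f" and K :: "'f set"
  assumes T: "tarskian Cn" and B: "boolean_logic Cn ng dsj" and KT: "Cn K = K"
begin

lemma cn_mono: "X \<subseteq> Y \<Longrightarrow> Cn X \<subseteq> Cn Y" using T unfolding tarskian_def by blast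
lemma cn_ext: "X \<subseteq> Cn X" using T unfolding tarskian_def by blast
lemma cn_idem: "Cn (Cn X) = Cn X" using T unfolding tarskian_def by blast
lemma cn_cut: "X \<subseteq> Cn Y \<Longrightarrow> Cn X \<subseteq> Cn Y" using cn_mono cn_idem by blast
lemma cn_in: "a \<in> X \<Longrightarrow> a \<in> Cn X" using cn_ext by blast

lemma explode: "\<phi> \<in> Cn X \<Longrightarrow> ng \<phi> \<in> Cn X \<Longrightarrow> \<chi> \<in> Cn X"
proof -
  assume "\<phi> \<in> Cn X" "ng \<phi> \<in> Cn X"
  then have "Cn {\<phi>, ng \<phi>} \<subseteq> Cn X" by (intro cn_cut) auto
  moreover have "Cn {\<phi>, ng \<phi>} = UNIV" using B unfolding boolean_logic_def by blast
  ultimately show ?thesis by blast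
qed

lemma dI1: "\<phi> \<in> Cn X \<Longrightarrow> dsj \<phi> \<psi> \<in> Cn X" using B unfolding boolean_logic_def by blast
lemma dI2: "\<psi> \<in> Cn X \<Longrightarrow> dsj \<phi> \<psi> \<in> Cn X" using B unfolding boolean_logic_def by blast
lemma dE: "\<chi> \<in> Cn (X \<union> {\<phi>}) \<Longrightarrow> \<chi> \<in> Cn (X \<union> {\<psi>}) \<Longrightarrow> \<chi> \<in> Cn (X \<union> {dsj \<phi> \<psi>})"
  using B unfolding boolean_logic_def by blast

lemma dE0: "\<chi> \<in> Cn {\<phi>} \<Longrightarrow> \<chi> \<in> Cn {\<psi>} \<Longrightarrow> \<chi> \<in> Cn {dsj \<phi> \<psi>}"
  using dE[of \<chi> "{}" \<phi> \<psi>] by simp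

lemma lem: "dsj \<phi> (ng \<phi>) \<in> Cn {}"
proof -
  have "dsj \<phi> (ng \<phi>) \<in> Cn {\<phi>}" by (rule dI1) (simp add: cn_in)
  moreover have "dsj \<phi> (ng \<phi>) \<in> Cn {ng \<phi>}" by (rule dI2) (simp add: cn_in)
  moreover have "Cn {\<phi>} \<inter> Cn {ng \<phi>} = Cn {}" using B unfolding boolean_logic_def by blast
  ultimately show ?thesis by blast
qed

lemma taut_in: "t \<in> Cn {} \<Longrightarrow> t \<in> Cn X" using cn_mono[of "{}" X] by blast

lemma absorb: "t \<in> Cn X \<Longrightarrow> \<chi> \<in> Cn (X \<union> {t}) \<Longrightarrow> \<chi> \<in> Cn X"
proof -
  assume "t \<in> Cn X" "\<chi> \<in> Cn (X \<union> {t})"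
  moreover have "X \<union> {t} \<subseteq> Cn X" using cn_ext \<open>t \<in> Cn X\<close> by blast
  ultimately show ?thesis using cn_cut by blast
qed

lemma split: "\<chi> \<in> Cn (X \<union> {\<phi>}) \<Longrightarrow> \<chi> \<in> Cn (X \<union> {ng \<phi>}) \<Longrightarrow> \<chi> \<in> Cn X"
  using dE absorb taut_in lem by blast

lemma ds2: "dsj a (ng b) \<in> Cn X \<Longrightarrow> b \<in> Cn X \<Longrightarrow> a \<in> Cn X"
proof -
  assume h: "dsj a (ng b) \<in> Cn X" "b \<in> Cn X"
  have "a \<in> Cn (X \<union> {a})" by (simp add: cn_in)
  moreover have "a \<in> Cn (X \<union> {ng b})"
  proof (rule explode)
    show "b \<in> Cn (X \<union> {ng b})" using h(2) cn_mono[of X "X \<union> {ng b}"] by blast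
    show "ng b \<in> Cn (X \<union> {ng b})" by (simp add: cn_in)
  qed
  ultimately have "a \<in> Cn (X \<union> {dsj a (ng b)})" by (rule dE)
  then show ?thesis using absorb h(1) by blast
qed

lemma ds1: "dsj a b \<in> Cn X \<Longrightarrow> ng b \<in> Cn X \<Longrightarrow> a \<in> Cn X"
proof -
  assume h: "dsj a b \<in> Cn X" "ng b \<in> Cn X"
  have "a \<in> Cn (X \<union> {a})" by (simp add: cn_in)
  moreover have "a \<in> Cn (X \<union> {b})"
  proof (rule explode[of b])
    show "ng b \<in> Cn (X \<union> {b})" using h(2) cn_mono[of X "X \<union> {b}"] by blast
    show "b \<in> Cn (X \<union> {b})" by (simp add: cn_in)
  qed
  ultimately have "a \<in> Cn (X \<union> {dsj a b})" by (rule dE)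
  then show ?thesis using absorb h(1) by blast
qed

lemma ent_trans: "b \<in> Cn {a} \<Longrightarrow> c \<in> Cn {b} \<Longrightarrow> c \<in> Cn {a}"
  using cn_cut[of "{b}" "{a}"] by blast

lemma self: "a \<in> Cn {a}" by (simp add: cn_in)

lemma thy_closed: "a \<in> K \<Longrightarrow> b \<in> Cn {a} \<Longrightarrow> b \<in> K"
  using cn_mono[of "{a}" K] KT by blast

lemma taut_cls: "z \<in> Cn {} \<Longrightarrow> Cn {z} = Cn {}"
  using cn_cut[of "{z}" "{}"] cn_mono[of "{}" "{z}"] by blast

definition U where "U r = {z \<in> K. z \<in> Cn {r}}"
definition Q :: "'f set \<Rightarrow> 'f set set" where "Q S = (\<lambda>\<phi>. Cn {\<phi>}) ` S"

lemma U_mono: "a \<in> Cn {b} \<Longrightarrow> infinite (Q (U a)) \<Longrightarrow> infinite (Q (U b))"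
proof -
  assume "a \<in> Cn {b}" "infinite (Q (U a))"
  have "U a \<subseteq> U b" unfolding U_def using ent_trans \<open>a \<in> Cn {b}\<close> by blast
  then have "Q (U a) \<subseteq> Q (U b)" unfolding Q_def by blast
  then show ?thesis using \<open>infinite (Q (U a))\<close> infinite_super by blast
qed

lemma pick: "infinite (Q S) \<Longrightarrow> finite F \<Longrightarrow> \<exists>z\<in>S. Cn {z} \<notin> F"
proof (rule ccontr)
  assume "infinite (Q S)" "finite F" "\<not> (\<exists>z\<in>S. Cn {z} \<notin> F)"
  then have "Q S \<subseteq> F" unfolding Q_def by blast
  then show False using \<open>infinite (Q S)\<close> \<open>finite F\<close> finite_subset by blast
qed

lemma recover:
  assumes "Cn {dsj z y} = Cn {dsj z' y}" "Cn {dsj z (ng y)} = Cn {dsj z' (ng y)}"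
  shows "z \<in> Cn {z'}"
proof (rule split[of z "{z'}" y])
  have a: "dsj z (ng y) \<in> Cn {z'}"
    using assms(2) self[of "dsj z (ng y)"] ent_trans dI1[OF self[of z'], of "ng y"] by blast
  have b: "dsj z y \<in> Cn {z'}"
    using assms(1) self[of "dsj z y"] ent_trans dI1[OF self[of z'], of y] by blast
  show "z \<in> Cn ({z'} \<union> {y})"
    by (rule ds2[of _ y]) (use a cn_mono[of "{z'}" "{z'} \<union> {y}"] cn_in in auto)
  show "z \<in> Cn ({z'} \<union> {ng y})"
    by (rule ds1[of _ y]) (use b cn_mono[of "{z'}" "{z'} \<union> {ng y}"] cn_in in auto)
qed

lemma product:
  assumes "infinite (Q (U r))"
  shows "infinite (Q (U (dsj r y))) \<or> infinite (Q (U (dsj r (ng y))))"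
proof (rule ccontr)
  assume "\<not> ?thesis"
  then have f: "finite (Q (U (dsj r y)) \<times> Q (U (dsj r (ng y))))" by simp
  let ?f = "\<lambda>z. (Cn {dsj z y}, Cn {dsj z (ng y)})"
  have "?f ` U r \<subseteq> Q (U (dsj r y)) \<times> Q (U (dsj r (ng y)))"
  proof
    fix p assume "p \<in> ?f ` U r"
    then obtain z where z: "z \<in> K" "z \<in> Cn {r}" "p = ?f z" unfolding U_def by blast
    have "dsj z y \<in> U (dsj r y)" unfolding U_def
      using thy_closed[OF z(1) dI1[OF self]] dE0[OF dI1[OF z(2)] dI2[OF self]] by blast
    moreover have "dsj z (ng y) \<in> U (dsj r (ng y))" unfolding U_def
      using thy_closed[OF z(1) dI1[OF self]] dE0[OF dI1[OF z(2)] dI2[OF self]] by blast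
    ultimately show "p \<in> Q (U (dsj r y)) \<times> Q (U (dsj r (ng y)))" unfolding Q_def using z(3) by blast
  qed
  then have "finite (?f ` U r)" using f finite_subset by blast
  moreover have "\<forall>z\<in>U r. \<forall>z'\<in>U r. ?f z = ?f z' \<longrightarrow> Cn {z} = Cn {z'}"
  proof (intro ballI impI)
    fix z z' assume "?f z = ?f z'"
    then have "z \<in> Cn {z'}" "z' \<in> Cn {z}" using recover[of z y z'] recover[of z' y z] by auto
    then show "Cn {z} = Cn {z'}" using cn_cut[of "{z}" "{z'}"] cn_cut[of "{z'}" "{z}"] by blast
  qed
  ultimately have "finite (Q (U r))" unfolding Q_def by (rule fin_transfer)
  then show False using assms by blast
qed

definition P where "P r x \<longleftrightarrow> x \<in> K \<and> x \<in> Cn {r} \<and> x \<notin> Cn {} \<and> infinite (Q (U (dsj r (ng x))))"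

lemma step: assumes "infinite (Q (U r))" shows "\<exists>x. P r x"
proof -
  obtain y where y: "y \<in> U r" "Cn {y} \<notin> {Cn {}}" using pick[OF assms, of "{Cn {}}"] by auto
  have yK: "y \<in> K" and yr: "y \<in> Cn {r}" using y(1) unfolding U_def by auto
  have yt: "y \<notin> Cn {}" using y(2) taut_cls by auto
  show ?thesis
  proof (cases "infinite (Q (U (dsj r (ng y))))")
    case True then show ?thesis unfolding P_def using yK yr yt by blast
  next
    case False
    then have "infinite (Q (U (dsj r y)))" using product[OF assms, of y] by blast
    then have iy: "infinite (Q (U y))" using U_mono dI2[OF self] by blast
    obtain y' where y': "y' \<in> U y" "Cn {y'} \<notin> {Cn {}, Cn {y}}" using pick[OF iy, of "{Cn {}, Cn {y}}"] by auto
    have y'K: "y' \<in> K" and y'y: "y' \<in> Cn {y}" using y'(1) unfolding U_def by auto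
    have y't: "y' \<notin> Cn {}" using y'(2) taut_cls by auto
    have y'r: "y' \<in> Cn {r}" using ent_trans yr y'y by blast
    show ?thesis
    proof (cases "infinite (Q (U (dsj y (ng y'))))")
      case True
      have "dsj y (ng y') \<in> Cn {dsj r (ng y')}" by (rule dE0[OF dI1[OF yr] dI2[OF self]])
      then have "infinite (Q (U (dsj r (ng y'))))" using U_mono True by blast
      then show ?thesis unfolding P_def using y'K y'r y't by blast
    next
      case False
      then have inf2: "infinite (Q (U (dsj y y')))" using product[OF iy, of y'] by blast
      let ?x = "dsj y (ng y')"
      have xK: "?x \<in> K" using thy_closed[OF yK dI1[OF self]] .
      have xr: "?x \<in> Cn {r}" using dI1[OF yr] .
      have xt: "?x \<notin> Cn {}"
      proof
        assume "?x \<in> Cn {}"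
        then have "y \<in> Cn {y'}" using ds2[of y y' "{y'}"] taut_in self by blast
        then have "Cn {y} = Cn {y'}"
          using y'y cn_cut[of "{y}" "{y'}"] cn_cut[of "{y'}" "{y}"] by blast
        then show False using y'(2) by blast
      qed
      have "y' \<in> Cn {ng ?x}"
      proof (rule split[of y' "{ng ?x}" y'])
        show "y' \<in> Cn ({ng ?x} \<union> {y'})" by (simp add: cn_in)
        show "y' \<in> Cn ({ng ?x} \<union> {ng y'})"
          by (rule explode[of ?x]) (auto intro: dI2 cn_in)
      qed
      then have "dsj y y' \<in> Cn {dsj r (ng ?x)}" by (rule dE0[OF dI1[OF yr] dI2])
      then have "infinite (Q (U (dsj r (ng ?x))))" using U_mono inf2 by blast
      then show ?thesis unfolding P_def using xK xr xt by blast
    qed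
  qed
qed

lemma main:
  assumes "infinite (Q (U r0))"
  shows "\<exists>C. cleaving Cn dsj C \<and> C \<subseteq> K"
proof -
  define nxt where "nxt r = (SOME x. P r x)" for r
  define rs where "rs = rec_nat r0 (\<lambda>_ r. dsj r (ng (nxt r)))"
  have rs0: "rs 0 = r0" and rsS: "rs (Suc n) = dsj (rs n) (ng (nxt (rs n)))" for n
    unfolding rs_def by simp_all
  have inv: "infinite (Q (U (rs n)))" for n
  proof (induction n)
    case 0 then show ?case using assms rs0 by simp
  next
    case (Suc n)
    have "P (rs n) (nxt (rs n))" unfolding nxt_def by (rule someI_ex[OF step[OF Suc]])
    then show ?case unfolding P_def rsS by blast
  qed
  define xs where "xs n = nxt (rs n)" for n
  have Pn: "P (rs n) (xs n)" for n unfolding xs_def nxt_def by (rule someI_ex[OF step[OF inv]])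
  have chain: "rs (Suc n + k) \<in> Cn {rs (Suc n)}" for n k
  proof (induction k)
    case 0 then show ?case using self by simp
  next
    case (Suc k)
    have "rs (Suc n + Suc k) \<in> Cn {rs (Suc n + k)}" using rsS dI1[OF self] by simp
    then show ?case using Suc ent_trans by blast
  qed
  have later: "xs m \<in> Cn {ng (xs n)}" if "n < m" for n m
  proof -
    obtain k where m: "m = Suc n + k" using \<open>n < m\<close> less_iff_Suc_add by blast
    have "xs m \<in> Cn {rs m}" using Pn unfolding P_def by blast
    then have "xs m \<in> Cn {rs (Suc n)}" using chain m ent_trans by blast
    moreover have "rs (Suc n) \<in> Cn {ng (xs n)}" using rsS xs_def dI2[OF self] by simp
    ultimately show ?thesis using ent_trans by blast
  qed
  have taut: "dsj (xs n) (xs m) \<in> Cn {} \<and> dsj (xs m) (xs n) \<in> Cn {}" if "n < m" for n m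
  proof -
    have "dsj (xs n) (xs m) \<in> Cn {}"
      by (rule split[of _ "{}" "xs n"]) (use dI1[OF self] dI2[OF later[OF that]] in auto)
    moreover have "dsj (xs m) (xs n) \<in> Cn {}"
      by (rule split[of _ "{}" "xs n"]) (use dI2[OF self] dI1[OF later[OF that]] in auto)
    ultimately show ?thesis by blast
  qed
  have noneq: "\<not> log_equiv Cn (xs n) (xs m)" if "n < m" for n m
  proof
    assume "log_equiv Cn (xs n) (xs m)"
    then have "xs n \<in> Cn {xs m}" unfolding log_equiv_def using self by blast
    then have "xs n \<in> Cn {dsj (xs n) (xs m)}" using dE0 self by blast
    then have "xs n \<in> Cn {}" using taut[OF that] cn_cut[of "{dsj (xs n) (xs m)}" "{}"] by blast
    then show False using Pn unfolding P_def by blast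
  qed
  have inj: "inj xs"
  proof (rule injI)
    fix n m assume "xs n = xs m"
    show "n = m"
    proof (rule ccontr)
      assume "n \<noteq> m"
      then have "n < m \<or> m < n" by arith
      then show False using noneq[of n m] noneq[of m n] \<open>xs n = xs m\<close> unfolding log_equiv_def by auto
    qed
  qed
  have "cleaving Cn dsj (range xs)"
    unfolding cleaving_def
  proof (intro conjI ballI impI)
    show "infinite (range xs)" using inj range_inj_infinite by blast
    fix \<phi> \<psi> assume "\<phi> \<in> range xs" "\<psi> \<in> range xs" "\<phi> \<noteq> \<psi>"
    then obtain n m where nm: "\<phi> = xs n" "\<psi> = xs m" "n \<noteq> m" by blast
    then have "n < m \<or> m < n" by arith
    then show "\<not> log_equiv Cn \<phi> \<psi>" using noneq[of n m] noneq[of m n] nm unfolding log_equiv_def by auto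
    show "dsj \<phi> \<psi> \<in> Cn {}" using \<open>n < m \<or> m < n\<close> taut[of n m] taut[of m n] nm by auto
  qed
  moreover have "range xs \<subseteq> K" using Pn unfolding P_def by blast
  ultimately show ?thesis by blast
qed

end

theorem mainTheorem6:
  fixes Cn :: "'f set \<Rightarrow> 'f set" and ng :: "'f \<Rightarrow> 'f"
    and dsj :: "'f \<Rightarrow> 'f \<Rightarrow> 'f" and K :: "'f set"
  assumes "compendious Cn ng dsj"
    and "is_theory Cn K"
    and "non_finitary Cn K"
  shows "\<exists>C. cleaving Cn dsj C \<and> C \<subseteq> K"
proof -
  interpret BLK Cn ng dsj K
    using assms unfolding compendious_def is_theory_def by unfold_locales auto
  fix a
  let ?t = "dsj a (ng a)"
  let ?r0 = "ng ?t"
  have all: "Cn {?r0} = UNIV"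
  proof -
    have "?t \<in> Cn {?r0}" using taut_in lem by blast
    then show ?thesis using explode[of ?t "{?r0}"] self by blast
  qed
  have UK: "U ?r0 = K" unfolding U_def using all by blast
  have "infinite ((\<lambda>\<phi>. Cn {\<phi>}) ` K)"
  proof
    assume "finite ((\<lambda>\<phi>. Cn {\<phi>}) ` K)"
    then have "finite ((\<lambda>\<phi>. {\<psi>. log_equiv Cn \<psi> \<phi>}) ` K)"
      by (rule fin_transfer) (auto simp: log_equiv_def)
    then show False using assms(3) unfolding non_finitary_def by blast
  qed
  then have "infinite (Q (U ?r0))" unfolding Q_def UK .
  then show ?thesis by (rule main)
qed

end
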